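(* Let $n\ge2$ be even and let $l<m$ be integers with $m-l\ge7$. Then only finitely many elements of $\mathrm{Tame}(\mathbf{k}^3)$ fix every vertex of the segment $\gamma[l,m]$.
   Context: Let $\mathbf{k}$ be a field of characteristic zero; $\mathrm{Tame}(\mathbf{k}^3)=\langle \mathrm{GL}_3(\mathbf{k})\ltimes\mathbf{k}^3,\ \{(x_1+P(x_2,x_3),x_2,x_3)\}\rangle$. For $r\in\{1,2,3\}$ a vertex of type $r$ is an orbit $[f_1,\dots,f_r]$, under post-composition by $\mathrm{GL}_r(\mathbf{k})\ltimes\mathbf{k}^r$, of the first $r$ components of an element $(f_1,f_2,f_3)\in\mathrm{Tame}(\mathbf{k}^3)$. $\mathcal{C}$ is the 2-dimensional simplicial complex on these vertices with triangles $[f_1],[f_1,f_2],[f_1,f_2,f_3]$ for $(f_1,f_2,f_3)\in\mathrm{Tame}(\mathbf{k}^3)$; $\mathrm{Tame}(\mathbf{k}^3)$ acts by $g\cdot[f_1,\dots,f_r]=[f_1\circ g^{-1},\dots,f_r\circ g^{-1}]$. Let $g^{-1}=(x_2,x_1+x_2x_3,x_3)$, $h^{-1}=(x_3,x_1,x_2)$, $f=g^n\circ h$. Define $\gamma\colon\mathbb{R}\to\mathcal{C}^1$ by $\gamma(0)=[x_1]$, $\gamma(1)=[x_1,x_3]$, $\gamma(2)=[x_3]$, $\gamma[0,2]$ the length 2 path through them, and $\gamma[2k,2k+2]=f^k\cdot\gamma[0,2]$ for $k\in\mathbb{Z}$; $\gamma[l,m]$ denotes the subpath with vertices $\gamma(l),\gamma(l+1),\dots,\gamma(m)$.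 *)

theory Defs
  imports "HOL-Analysis.Analysis"
begin

text \<open>Points of k^3 are vectors of type 'k^3; polynomial maps / automorphisms of k^3
  are represented by the functions they induce on points (faithful since char k = 0,
  so k is infinite).\<close>

inductive_set poly2 :: "('k::field_char_0 \<Rightarrow> 'k \<Rightarrow> 'k) set" where
  const: "(\<lambda>a b. c) \<in> poly2"
| var1: "(\<lambda>a b. a) \<in> poly2"
| var2: "(\<lambda>a b. b) \<in> poly2"
| add: "P \<in> poly2 \<Longrightarrow> Q \<in> poly2 \<Longrightarrow> (\<lambda>a b. P a b + Q a b) \<in> poly2"
| mult: "P \<in> poly2 \<Longrightarrow> Q \<in> poly2 \<Longrightarrow> (\<lambda>a b. P a b * Q a b) \<in> poly2"

definition x1 :: "'k::field_char_0^3 \<Rightarrow> 'k" where "x1 = (\<lambda>x. x $ 1)"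
definition x3 :: "'k::field_char_0^3 \<Rightarrow> 'k" where "x3 = (\<lambda>x. x $ 3)"

definition mk3 :: "'k::field_char_0 \<Rightarrow> 'k \<Rightarrow> 'k \<Rightarrow> 'k^3" where
  "mk3 a b c = vector [a, b, c]"

definition elementary :: "('k::field_char_0 \<Rightarrow> 'k \<Rightarrow> 'k) \<Rightarrow> 'k^3 \<Rightarrow> 'k^3" where
  "elementary P = (\<lambda>x. mk3 (x$1 + P (x$2) (x$3)) (x$2) (x$3))"

inductive_set tame :: "('k::field_char_0^3 \<Rightarrow> 'k^3) set" where
  affine: "invertible (A :: 'k^3^3) \<Longrightarrow> (\<lambda>x. A *v x + b) \<in> tame"
| elem: "P \<in> poly2 \<Longrightarrow> elementary P \<in> tame"
| comp: "f \<in> tame \<Longrightarrow> g \<in> tame \<Longrightarrow> f \<circ> g \<in> tame"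
| inverse: "f \<in> tame \<Longrightarrow> inv f \<in> tame"

definition GLr :: "nat \<Rightarrow> (nat \<Rightarrow> nat \<Rightarrow> 'k::field_char_0) \<Rightarrow> bool" where
  "GLr r A \<longleftrightarrow> (\<exists>B. \<forall>i<r. \<forall>k<r.
      (\<Sum>j<r. A i j * B j k) = (if i = k then 1 else 0) \<and>
      (\<Sum>j<r. B i j * A j k) = (if i = k then 1 else 0))"

definition vertex :: "('k::field_char_0^3 \<Rightarrow> 'k) list \<Rightarrow> ('k^3 \<Rightarrow> 'k) list set" where
  "vertex fs = {gs. length gs = length fs \<and>
     (\<exists>A b. GLr (length fs) A \<and>
        (\<forall>i<length fs. gs ! i = (\<lambda>x. (\<Sum>j<length fs. A i j * (fs ! j) x) + b i)))}"

definition act :: "('k::field_char_0^3 \<Rightarrow> 'k^3) \<Rightarrow> ('k^3 \<Rightarrow> 'k) list set \<Rightarrow> ('k^3 \<Rightarrow> 'k) list set" where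
  "act g V = (\<lambda>fs. map (\<lambda>c. c \<circ> inv g) fs) ` V"

definition g_inv :: "'k::field_char_0^3 \<Rightarrow> 'k^3" where
  "g_inv = (\<lambda>x. mk3 (x$2) (x$1 + x$2 * x$3) (x$3))"

definition h_inv :: "'k::field_char_0^3 \<Rightarrow> 'k^3" where
  "h_inv = (\<lambda>x. mk3 (x$3) (x$1) (x$2))"

definition gmap :: "'k::field_char_0^3 \<Rightarrow> 'k^3" where
  "gmap = inv g_inv"

definition hmap :: "'k::field_char_0^3 \<Rightarrow> 'k^3" where
  "hmap = inv h_inv"

definition fmap :: "nat \<Rightarrow> 'k::field_char_0^3 \<Rightarrow> 'k^3" where
  "fmap n = (gmap ^^ n) \<circ> hmap"

definition fpow :: "nat \<Rightarrow> int \<Rightarrow> 'k::field_char_0^3 \<Rightarrow> 'k^3" where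
  "fpow n k = (if 0 \<le> k then fmap n ^^ nat k else inv (fmap n) ^^ nat (- k))"

text \<open>The path gamma: gamma(2k) = f^k \<cdot> [x1], gamma(2k+1) = f^k \<cdot> [x1,x3]
  (and gamma(2k+2) = f^k \<cdot> [x3] = f^(k+1) \<cdot> [x1]).\<close>
definition gamma :: "nat \<Rightarrow> int \<Rightarrow> ('k::field_char_0^3 \<Rightarrow> 'k) list set" where
  "gamma n i = (if even i then act (fpow n (i div 2)) (vertex [x1])
                else act (fpow n (i div 2)) (vertex [x1, x3]))"

end

theory Submission
  imports Defs
begin


lemma mk3_nth[simp]: "mk3 a b c $ 1 = a" "mk3 a b c $ 2 = b" "mk3 a b c $ 3 = c"
  by (simp_all add: mk3_def)

lemma vec3_eq: "(x::'a^3) = y \<longleftrightarrow> x$1 = y$1 \<and> x$2 = y$2 \<and> x$3 = y$3"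
  by (simp add: vec_eq_iff forall_3)

lemma mk3_eta: "mk3 (x$1) (x$2) (x$3) = x"
  by (simp add: vec3_eq)

inductive_set polyF :: "('k::field_char_0^3 \<Rightarrow> 'k) set" where
  const: "(\<lambda>x. c) \<in> polyF"
| proj: "(\<lambda>x. x $ i) \<in> polyF"
| add: "P \<in> polyF \<Longrightarrow> Q \<in> polyF \<Longrightarrow> (\<lambda>x. P x + Q x) \<in> polyF"
| mult: "P \<in> polyF \<Longrightarrow> Q \<in> polyF \<Longrightarrow> (\<lambda>x. P x * Q x) \<in> polyF"

definition polymap :: "('k::field_char_0^3 \<Rightarrow> 'k^3) \<Rightarrow> bool" where
  "polymap g \<longleftrightarrow> (\<forall>i. (\<lambda>x. g x $ i) \<in> polyF)"

lemma polyF_restr: "F \<in> polyF \<Longrightarrow> \<exists>q. \<forall>t. F (mk3 a b t) = poly q t"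
proof (induction rule: polyF.induct)
  case (const c) then show ?case by (intro exI[of _ "[:c:]"]) simp
next
  case (proj i)
  consider "i = 1" | "i = 2" | "i = 3" using exhaust_3 by blast
  then show ?case
  proof cases
    case 1 then show ?thesis by (intro exI[of _ "[:a:]"]) simp
  next
    case 2 then show ?thesis by (intro exI[of _ "[:b:]"]) simp
  next
    case 3 then show ?thesis by (intro exI[of _ "[:0,1:]"]) simp
  qed
next
  case (add P Q)
  then obtain p q where "\<forall>t. P (mk3 a b t) = poly p t" "\<forall>t. Q (mk3 a b t) = poly q t" by blast
  then show ?case by (intro exI[of _ "p + q"]) simp
next
  case (mult P Q)
  then obtain p q where "\<forall>t. P (mk3 a b t) = poly p t" "\<forall>t. Q (mk3 a b t) = poly q t" by blast
  then show ?case by (intro exI[of _ "p * q"]) simp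
qed

lemma polyF_subst: "F \<in> polyF \<Longrightarrow> polymap g \<Longrightarrow> (\<lambda>x. F (g x)) \<in> polyF"
proof (induction rule: polyF.induct)
  case (const c) show ?case by (rule polyF.const)
next
  case (proj i) then show ?case by (simp add: polymap_def)
next
  case (add P Q) then show ?case using polyF.add by blast
next
  case (mult P Q) then show ?case using polyF.mult by blast
qed

lemma polymap_comp: "polymap f \<Longrightarrow> polymap g \<Longrightarrow> polymap (f \<circ> g)"
proof -
  assume "polymap f" "polymap g"
  have "(\<lambda>x. f (g x) $ i) \<in> polyF" for i
    using \<open>polymap f\<close> \<open>polymap g\<close> polyF_subst[of "\<lambda>x. f x $ i" g] by (simp add: polymap_def)
  then show ?thesis by (simp add: polymap_def)
qed

lemma poly2_polyF: "P \<in> poly2 \<Longrightarrow> (\<lambda>x. P (x$2) (x$3)) \<in> polyF"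
proof (induction rule: poly2.induct)
  case (const c) show ?case by (rule polyF.const)
next
  case var1 show ?case by (rule polyF.proj)
next
  case var2 show ?case by (rule polyF.proj)
next
  case (add P Q) then show ?case using polyF.add by blast
next
  case (mult P Q) then show ?case using polyF.mult by blast
qed

lemma polyF_sum: "finite S \<Longrightarrow> (\<And>j. j \<in> S \<Longrightarrow> G j \<in> polyF) \<Longrightarrow> (\<lambda>x. \<Sum>j\<in>S. G j x) \<in> polyF"
proof (induction rule: finite_induct)
  case empty then show ?case using polyF.const[of 0] by simp
next
  case (insert j S) then show ?case using polyF.add[of "G j" "\<lambda>x. \<Sum>j\<in>S. G j x"] by simp
qed

lemma polymap_affine: "polymap (\<lambda>x. (M::'k::field_char_0^3^3) *v x + c)"
  unfolding polymap_def
proof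
  fix i
  have "(\<lambda>x. \<Sum>j\<in>UNIV. M$i$j * x$j) \<in> polyF"
    by (rule polyF_sum) (simp_all add: polyF.mult[OF polyF.const polyF.proj])
  then have "(\<lambda>x. (\<Sum>j\<in>UNIV. M$i$j * x$j) + c$i) \<in> polyF" by (rule polyF.add[OF _ polyF.const])
  then show "(\<lambda>x. (M *v x + c) $ i) \<in> polyF"
    by (simp add: matrix_vector_mult_def)
qed

lemma elementary_comp: "elementary Q (elementary P x) = elementary (\<lambda>a b. P a b + Q a b) x"
  by (simp add: elementary_def vec3_eq algebra_simps)

lemma elementary_0: "elementary (\<lambda>a b. 0) = id"
  by (simp add: elementary_def fun_eq_iff mk3_eta)

lemma tame_poly: "f \<in> tame \<Longrightarrow> bij f \<and> polymap f \<and> polymap (inv f)"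
proof (induction rule: tame.induct)
  case (affine A b)
  then obtain A' where A': "A ** A' = mat 1" "A' ** A = mat 1" unfolding invertible_def by blast
  let ?f = "\<lambda>x. A *v x + b" and ?g = "\<lambda>y. A' *v y + (- (A' *v b))"
  have fg: "?f \<circ> ?g = id"
  proof
    fix x
    have "A *v (A' *v x + - (A' *v b)) + b = (A ** A') *v x - (A ** A') *v b + b"
      by (simp add: matrix_vector_right_distrib matrix_vector_mul_assoc matrix_vector_mult_diff_distrib)
    then show "(?f \<circ> ?g) x = id x" using A' by simp
  qed
  have gf: "?g \<circ> ?f = id"
  proof
    fix x
    have "A' *v (A *v x + b) + - (A' *v b) = (A' ** A) *v x"
      by (simp add: matrix_vector_right_distrib matrix_vector_mul_assoc matrix_vector_mult_diff_distrib)
    then show "(?g \<circ> ?f) x = id x" using A' by simp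
  qed
  have "inv ?f = ?g" by (rule inv_unique_comp[OF fg gf])
  then show ?case using o_bij[OF gf fg] polymap_affine by metis
next
  case (elem P)
  let ?Q = "\<lambda>a b. - P a b"
  have fg: "elementary P \<circ> elementary ?Q = id" and gf: "elementary ?Q \<circ> elementary P = id"
    by (simp_all add: fun_eq_iff elementary_def vec3_eq)
  have Q: "?Q \<in> poly2" using poly2.mult[OF poly2.const[of "-1"] elem] by simp
  have pm: "polymap (elementary R)" if R: "R \<in> poly2" for R
    unfolding polymap_def
  proof
    fix i :: 3
    have e1: "(\<lambda>x. elementary R x $ 1) \<in> polyF"
      using polyF.add[OF polyF.proj[of 1] poly2_polyF[OF R]] by (simp add: elementary_def)
    have e2: "(\<lambda>x. elementary R x $ 2) \<in> polyF"
      using polyF.proj[of 2] by (simp add: elementary_def)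
    have e3: "(\<lambda>x. elementary R x $ 3) \<in> polyF"
      using polyF.proj[of 3] by (simp add: elementary_def)
    show "(\<lambda>x. elementary R x $ i) \<in> polyF"
      using exhaust_3[of i] e1 e2 e3 by blast
  qed
  have "inv (elementary P) = elementary ?Q" by (rule inv_unique_comp[OF fg gf])
  then show ?case using o_bij[OF gf fg] pm[OF elem] pm[OF Q] by simp
next
  case (comp f g)
  then have "bij (f \<circ> g)" "inv (f \<circ> g) = inv g \<circ> inv f" by (simp_all add: bij_comp o_inv_distrib)
  moreover have "polymap (f \<circ> g)" using comp polymap_comp by blast
  moreover have "polymap (inv g \<circ> inv f)" using comp polymap_comp by blast
  ultimately show ?case by (simp add: comp_def)
next
  case (inverse f)
  then have "bij (inv f)" "inv (inv f) = f" by (simp_all add: bij_imp_bij_inv inv_inv_eq)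
  moreover have "polymap (inv f)" "polymap f" using inverse by simp_all
  ultimately show ?case by simp
qed



fun q :: "nat \<Rightarrow> 'k::field_char_0 poly" where
  "q 0 = [:1:]"
| "q (Suc 0) = 0"
| "q (Suc (Suc k)) = pCons 0 (q (Suc k)) + q k"

lemma q_coeff_rec: "coeff (q (Suc (Suc k))) i = (if i = 0 then 0 else coeff (q (Suc k)) (i - 1)) + coeff (q k) i"
  by (cases i) simp_all

lemma q_coeff_high: "k < i + 2 \<Longrightarrow> coeff (q k :: 'k::field_char_0 poly) i = (if i = 0 \<and> k = 0 then 1 else 0)"
proof (induction k arbitrary: i rule: q.induct)
  case 1 then show ?case by (cases i) simp_all
next
  case 2 then show ?case by simp
next
  case (3 k)
  then obtain j where j: "i = Suc j" by (cases i) auto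
  have "coeff (q (Suc (Suc k)) :: 'k poly) i = coeff (q (Suc k) :: 'k poly) j + coeff (q k :: 'k poly) i"
    using q_coeff_rec[of k i] j by simp
  also have "coeff (q (Suc k) :: 'k poly) j = 0" using 3(1)[of j] 3(3) j by (simp del: q.simps)
  also have "coeff (q k :: 'k poly) i = 0" using 3(2)[of i] 3(3) j by simp
  finally show ?case using j by simp
qed

lemma q_lead: "coeff (q (k + 2) :: 'k::field_char_0 poly) k = 1"
proof (induction k)
  case 0 then show ?case by (simp add: numeral_2_eq_2)
next
  case (Suc k)
  have "coeff (q (Suc k + 2) :: 'k poly) (Suc k) = coeff (q (k + 2) :: 'k poly) k + coeff (q (Suc k) :: 'k poly) (Suc k)"
    using q_coeff_rec[of "Suc k" "Suc k"] by (simp add: numeral_2_eq_2)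
  also have "coeff (q (Suc k) :: 'k poly) (Suc k) = 0" by (simp add: q_coeff_high)
  finally show ?case using Suc by simp
qed

lemma q_sub: "coeff (q (k + 4) :: 'k::field_char_0 poly) k = of_nat (k + 1)"
proof (induction k)
  case 0
  have "coeff (q (0 + 4) :: 'k poly) 0 = coeff (q 2 :: 'k poly) 0" using q_coeff_rec[of 2 0] by (simp add: numeral_eq_Suc)
  then show ?case by (simp add: numeral_eq_Suc)
next
  case (Suc k)
  have "coeff (q (Suc k + 4) :: 'k poly) (Suc k) = coeff (q (k + 4) :: 'k poly) k + coeff (q (k + 3) :: 'k poly) (Suc k)"
    using q_coeff_rec[of "k + 3" "Suc k"] by (simp add: numeral_eq_Suc)
  also have "coeff (q (k + 3) :: 'k poly) (Suc k) = 1" using q_lead[of "Suc k"] by (simp add: numeral_eq_Suc)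
  also have "coeff (q (k + 4) :: 'k poly) k = of_nat (k + 1)" by (rule Suc.IH)
  also have "of_nat (k + 1) + 1 = (of_nat (Suc k + 1) :: 'k)" by (simp only: of_nat_add of_nat_1 of_nat_Suc add_ac)
  finally show ?case .
qed

lemma q_degree: "degree (q (k + 2) :: 'k::field_char_0 poly) = k"
proof (rule antisym)
  show "degree (q (k + 2) :: 'k poly) \<le> k"
  proof (rule degree_le, intro allI impI)
    fix i assume "k < i"
    then show "coeff (q (k + 2) :: 'k poly) i = 0" using q_coeff_high[of "k+2" i] by simp
  qed
  show "k \<le> degree (q (k + 2) :: 'k poly)"
    by (rule le_degree) (metis q_lead one_neq_zero)
qed

lemma q_parity: "poly (q k) (- t::'k::field_char_0) = (-1) ^ k * poly (q k) t"
  by (induction k rule: q.induct) (simp_all add: algebra_simps)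

lemma q_even0: "poly (q (2 * m)) (0::'k::field_char_0) = 1"
proof (induction m)
  case 0 then show ?case by simp
next
  case (Suc m)
  have "2 * Suc m = Suc (Suc (2 * m))" by simp
  then show ?case using Suc by (simp add: poly_0_coeff_0)
qed

lemma q_odd0: "odd k \<Longrightarrow> poly (q k) (0::'k::field_char_0) = 0"
  using q_parity[of k "0::'k"] by simp

lemma coeff_pcompose_scale: "coeff (pcompose p [:0, c:]) i = c ^ i * coeff p i" for p :: "'k::field_char_0 poly"
proof (induction p arbitrary: i rule: pCons_induct)
  case 0 then show ?case by simp
next
  case (pCons a p)
  show ?case
  proof (cases i)
    case 0 then show ?thesis by (simp add: pcompose_pCons del: mult_1 mult_1_left)
  next
    case (Suc j) then show ?thesis using pCons.IH[of j] by (simp add: pcompose_pCons)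
  qed
qed



definition Fi :: "nat \<Rightarrow> 'k::field_char_0^3 \<Rightarrow> 'k^3" where
  "Fi n y = mk3 (y$3) (poly (q n) (y$3) * y$1 + poly (q (n+1)) (y$3) * y$2)
                      (poly (q (n+1)) (y$3) * y$1 + poly (q (n+2)) (y$3) * y$2)"

lemma nonconst:
  fixes p :: "'k::field_char_0 poly"
  assumes "1 \<le> degree p" "infinite S" "\<forall>u\<in>S. poly p u = k"
  shows False
proof -
  let ?r = "p - [:k:]"
  have "?r \<noteq> 0"
  proof
    assume "?r = 0" then have "p = [:k:]" by simp
    then show False using assms(1) by simp
  qed
  then have "finite {x. poly ?r x = 0}" by (rule poly_roots_finite)
  moreover have "S \<subseteq> {x. poly ?r x = 0}" using assms(3) by auto
  ultimately show False using assms(2) finite_subset by blast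
qed

lemma divdeg:
  fixes R D E :: "'k::field_char_0 poly"
  assumes "R * D = E" "D \<noteq> 0" "degree E < degree D"
  shows "E = 0"
proof (cases "R = 0")
  case True then show ?thesis using assms by simp
next
  case False
  then have "degree E = degree R + degree D" using assms degree_mult_eq by metis
  then show ?thesis using assms(3) by simp
qed

lemma scal:
  fixes \<kappa> c e :: "'k::field_char_0"
  assumes n2: "n \<ge> 2" and eq: "smult \<kappa> (pcompose (q (n+2)) [:0, e:]) = smult c (q (n+2))"
    and k: "\<kappa> \<noteq> 0" and e: "e \<noteq> 0"
  shows "e^2 = 1 \<and> \<kappa> * e^n = c"
proof -
  obtain m where m: "n = m + 2" using n2 by (metis add.commute le_iff_add)
  have c1: "\<kappa> * e ^ n = c"
    using arg_cong[OF eq, of "\<lambda>p. coeff p n"] q_lead[of n, where 'k='k]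
    by (simp add: coeff_pcompose_scale del: q.simps)
  have nm: "n + 2 = m + 4" using m by simp
  have "coeff (q (n+2) :: 'k poly) m = of_nat (m + 1)" unfolding nm by (rule q_sub)
  then have "\<kappa> * (e ^ m * of_nat (m+1)) = c * of_nat (m+1)"
    using arg_cong[OF eq, of "\<lambda>p. coeff p m"] by (simp add: coeff_pcompose_scale del: q.simps)
  then have c2: "\<kappa> * e ^ m = c" by (metis mult.assoc mult_cancel_right of_nat_eq_0_iff add_eq_0_iff_both_eq_0 one_neq_zero)
  have "\<kappa> * e ^ m * e^2 = \<kappa> * e ^ n" using m by (simp add: power_add power2_eq_square)
  then have "\<kappa> * e ^ m * e^2 = \<kappa> * e ^ m * 1" using c1 c2 by simp
  then have "e^2 = 1" using k e by simp
  then show ?thesis using c1 by simp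
qed



lemma core:
  fixes \<psi> :: "'k::field_char_0^3 \<Rightarrow> 'k^3"
  assumes n2: "n \<ge> 2" and ev: "even n" and pm: "polymap \<psi>"
    and h: "\<And>k. k < 4 \<Longrightarrow> \<exists>\<alpha> \<beta>. \<alpha> \<noteq> 0 \<and> (\<forall>y. ((Fi n)^^k) (\<psi> y) $ 1 = \<alpha> * ((Fi n)^^k) y $ 1 + \<beta>)"
  shows "\<exists>c e. (c = 1 \<or> c = -1) \<and> (e = 1 \<or> e = -1) \<and> \<psi> = (\<lambda>y. mk3 (c*e*y$1) (c*y$2) (e*y$3))"
proof -
  define B where "B = (q (n+1) :: 'k poly)"
  define Cp where "Cp = (q (n+2) :: 'k poly)"
  define A0 where "A0 = (q n :: 'k poly)"
  have Fi_eq: "Fi n y = mk3 (y$3) (poly A0 (y$3) * y$1 + poly B (y$3) * y$2)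
                 (poly B (y$3) * y$1 + poly Cp (y$3) * y$2)" for y
    by (simp add: Fi_def A0_def B_def Cp_def)
  have degC: "degree Cp = n" using q_degree[of n, where 'k='k] by (simp add: Cp_def del: q.simps)
  have n1: "n - 1 + 2 = n + 1" using n2 by simp
  have degB: "degree B = n - 1" using q_degree[of "n - 1", where 'k='k] unfolding n1 B_def .
  have leadB: "coeff B (n - 1) = 1" using q_lead[of "n - 1", where 'k='k] unfolding n1 B_def .
  obtain h where hn: "n = 2 * h" using ev by blast
  have C0: "poly Cp 0 = 1" using q_even0[of "h + 1", where 'k='k] hn by (simp add: Cp_def del: q.simps)
  have A00: "poly A0 0 = 1" using q_even0[of h, where 'k='k] hn by (simp add: A0_def del: q.simps)
  have B0: "poly B 0 = 0" using q_odd0[of "n+1", where 'k='k] ev by (simp add: B_def del: q.simps)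
  have Bodd: "poly B (- t) = - poly B t" for t
    using q_parity[of "n+1" t] ev by (simp add: B_def del: q.simps)
  have Cnz: "Cp \<noteq> 0" using C0 by auto
  obtain a b where a: "a \<noteq> 0" and h0: "\<forall>y. \<psi> y $ 1 = a * y$1 + b" using h[of 0] by auto
  obtain e b' where e: "e \<noteq> 0" and h1: "\<forall>y. \<psi> y $ 3 = e * y$3 + b'"
    using h[of 1] by (auto simp: Fi_eq)
  obtain c d where c: "c \<noteq> 0" and h2: "\<forall>y. poly B (\<psi> y $ 3) * \<psi> y $ 1 + poly Cp (\<psi> y $ 3) * \<psi> y $ 2
        = c * (poly B (y$3) * y$1 + poly Cp (y$3) * y$2) + d"
    using h[of 2] by (auto simp: Fi_eq numeral_2_eq_2)
  obtain c' d' where h3: "\<forall>y. (Fi n ^^ 3) (\<psi> y) $ 1 = c' * (Fi n ^^ 3) y $ 1 + d'"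
    using h[of 3] by auto
  define Be where "Be = pcompose B [:b', e:]"
  define Ce where "Ce = pcompose Cp [:b', e:]"
  have degCe: "degree Ce = n" using degC e by (simp add: Ce_def degree_pcompose)
  have degBe: "degree Be = n - 1" using degB e by (simp add: Be_def degree_pcompose)
  have Cenz: "Ce \<noteq> 0" using degCe n2 by auto
  have Rex: "\<exists>R. \<forall>t. \<psi> (mk3 r s t) $ 2 = poly R t" for r s
    using pm polyF_restr unfolding polymap_def by blast
  have keyeq: "R * Ce = smult (c*r) B + smult (c* s) Cp + (pCons d 0) - smult (a*r+b) Be"
    if R: "\<forall>t. \<psi> (mk3 r s t) $ 2 = poly R t" for R r s
  proof -
    have "poly (R * Ce) t = poly (smult (c*r) B + smult (c* s) Cp + (pCons d 0) - smult (a*r+b) Be) t" for t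
    proof -
      have "poly B (e * t + b') * (a * r + b) + poly Cp (e * t + b') * poly R t
            = c * (poly B t * r + poly Cp t * s) + d"
        using h2[rule_format, of "mk3 r s t"] h0[rule_format, of "mk3 r s t"] h1[rule_format, of "mk3 r s t"]
          R[rule_format, of t] by simp
      then show ?thesis by (simp add: Ce_def Be_def poly_pcompose algebra_simps)
    qed
    then show ?thesis using poly_eq_poly_eq_iff by blast
  qed
  obtain R00 where R00: "\<forall>t. \<psi> (mk3 0 0 t) $ 2 = poly R00 t" using Rex by blast
  have E0: "R00 * Ce = (pCons d 0) - smult b Be" using keyeq[OF R00] by simp
  have "degree ((pCons d 0) - smult b Be) < degree Ce"
  proof -
    have "degree ((pCons d 0) - smult b Be) \<le> n - 1"
      by (rule degree_diff_le) (simp_all add: degBe)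
    then show ?thesis using degCe n2 by simp
  qed
  then have E0': "(pCons d 0) - smult b Be = 0" using divdeg[OF E0 Cenz] by blast
  have b0: "b = 0"
  proof (rule ccontr)
    assume "b \<noteq> 0"
    have "\<forall>u\<in>UNIV. poly B u = d / b"
    proof
      fix u
      have "poly ((pCons d 0) - smult b Be) ((u - b') / e) = 0" using E0' by simp
      then have "d = b * poly B u" using e by (simp add: Be_def poly_pcompose)
      then show "poly B u = d / b" using \<open>b \<noteq> 0\<close> by (simp add: field_simps)
    qed
    moreover have "1 \<le> degree B" using degB n2 by simp
    ultimately show False using nonconst infinite_UNIV_char_0 by blast
  qed
  have d0: "d = 0" using E0' b0 by simp
  obtain R01 where R01: "\<forall>t. \<psi> (mk3 0 1 t) $ 2 = poly R01 t" using Rex by blast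
  have E1: "R01 * Ce = smult c Cp" using keyeq[OF R01] b0 d0 by simp
  have R01nz: "R01 \<noteq> 0" using E1 c Cnz by auto
  have "degree R01 + n = n" using degree_mult_eq[OF R01nz Cenz] E1 degCe degC c by simp
  then have "degree R01 = 0" by simp
  then have R01c: "R01 = [:coeff R01 0:]" using degree_0_id by metis
  define \<kappa> where "\<kappa> = coeff R01 0"
  have knz: "\<kappa> \<noteq> 0" using R01nz R01c \<kappa>_def by auto
  have E1': "smult \<kappa> Ce = smult c Cp"
  proof -
    have "smult \<kappa> Ce = [:\<kappa>:] * Ce" by simp
    also have "[:\<kappa>:] = R01" using R01c \<kappa>_def by simp
    finally show ?thesis using E1 by simp
  qed
  obtain R10 where R10: "\<forall>t. \<psi> (mk3 1 0 t) $ 2 = poly R10 t" using Rex by blast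
  have E2: "R10 * Ce = smult c B - smult a Be" using keyeq[OF R10] b0 d0 by simp
  have "degree (smult c B - smult a Be) < degree Ce"
  proof -
    have "degree (smult c B - smult a Be) \<le> n - 1"
      by (rule degree_diff_le) (simp_all add: degBe degB)
    then show ?thesis using degCe n2 by simp
  qed
  then have E2': "smult c B - smult a Be = 0" using divdeg[OF E2 Cenz] by blast
  have hB: "c * poly B t = a * poly B (e * t + b')" for t
  proof -
    have "poly (smult c B - smult a Be) t = 0" using E2' by simp
    then show ?thesis by (simp add: Be_def poly_pcompose algebra_simps)
  qed
  have per: "poly B (u + 2 * b') = poly B u" for u
  proof -
    define t where "t = - (u + b') / e"
    have t1: "e * t + b' = - u" using e by (simp add: t_def field_simps)
    have t2: "e * (- t) + b' = u + 2 * b'" using e by (simp add: t_def field_simps)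
    have 1: "c * poly B t = - a * poly B u" using hB[of t] unfolding t1 Bodd[of u] by simp
    have 2: "- c * poly B t = a * poly B (u + 2 * b')" using hB[of "- t"] unfolding t2 Bodd[of t] by simp
    have "a * poly B (u + 2 * b') = a * poly B u" using 1 2 by (metis minus_mult_left minus_minus)
    then show ?thesis using a by simp
  qed
  have b'0: "b' = 0"
  proof (rule ccontr)
    assume b'nz: "b' \<noteq> 0"
    let ?S = "range (\<lambda>m::nat. of_nat m * (2 * b'))"
    have "poly B (of_nat m * (2 * b')) = poly B 0" for m
    proof (induction m)
      case 0 then show ?case by simp
    next
      case (Suc m)
      have "poly B (of_nat (Suc m) * (2 * b')) = poly B (of_nat m * (2 * b') + 2 * b')"
        by (simp add: algebra_simps)
      also have "\<dots> = poly B (of_nat m * (2 * b'))" by (rule per)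
      finally show ?case using Suc by simp
    qed
    then have "\<forall>x\<in>?S. poly B x = poly B 0" by auto
    moreover have "inj (\<lambda>m::nat. of_nat m * (2 * b') :: 'k)"
      by (rule injI) (use b'nz in simp)
    then have "infinite ?S" using range_inj_infinite by blast
    moreover have "1 \<le> degree B" using degB n2 by simp
    ultimately show False using nonconst by blast
  qed
  have sc1: "e^2 = 1 \<and> \<kappa> * e^n = c"
    using scal[OF n2 _ knz e, of c] E1' b'0 by (simp add: Ce_def Cp_def)
  have e2: "e^2 = 1" using sc1 by simp
  have en: "e^n = 1" using e2 hn by (simp add: power_mult)
  have kc: "\<kappa> = c" using sc1 en by simp
  have Ce_C: "Ce = Cp" using E1' kc c smult_cancel by blast
  have "coeff (smult c B) (n - 1) = coeff (smult a Be) (n - 1)" using E2' by simp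
  then have cae1: "c = a * e ^ (n - 1)" using leadB b'0 by (simp add: Be_def coeff_pcompose_scale)
  have "e * e ^ (n - 1) = e * e" using en e2 n2
    by (metis One_nat_def Suc_pred less_le_trans numeral_2_eq_2 pos2 power2_eq_square power_Suc)
  then have "e ^ (n - 1) = e" using e by simp
  then have cae: "c = a * e" using cae1 by simp
  have psi2: "\<psi> (mk3 r s t) $ 2 = c * s" for r s t
  proof -
    obtain R where R: "\<forall>t. \<psi> (mk3 r s t) $ 2 = poly R t" using Rex by blast
    have "R * Cp = smult (c*r) B + smult (c* s) Cp - smult (a*r) Be" using keyeq[OF R] b0 d0 Ce_C by simp
    also have "smult (a*r) Be = smult (c*r) B"
    proof -
      have "smult (a*r) Be = smult r (smult a Be)" by (simp add: mult.commute)
      also have "smult a Be = smult c B" using E2' by simp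
      finally show ?thesis by (simp add: mult.commute)
    qed
    finally have "R * Cp = [:c* s:] * Cp" by simp
    then have "R = [:c * s:]" using Cnz mult_cancel_right by metis
    then show ?thesis using R by simp
  qed
  have psi: "\<psi> y = mk3 (a * y$1) (c * y$2) (e * y$3)" for y
  proof -
    have "\<psi> y $ 2 = c * y$2" using psi2[of "y$1" "y$2" "y$3"] by (simp add: mk3_eta)
    then show ?thesis using h0 h1 b0 b'0 by (simp add: vec3_eq)
  qed
  have F3: "(Fi n ^^ 3) (mk3 r s 0) $ 1 = poly Cp s * r" for r s
    by (simp add: numeral_3_eq_3 Fi_eq A00 B0 C0)
  have F3psi: "(Fi n ^^ 3) (\<psi> (mk3 r s 0)) $ 1 = poly Cp (c* s) * (a*r)" for r s
    using F3[of "a*r" "c* s"] psi[of "mk3 r s 0"] by simp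
  have E3: "poly Cp (c* s) * (a*r) = c' * (poly Cp s * r) + d'" for r s
    using h3 F3 F3psi by metis
  have d'0: "d' = 0" using E3[of _ 0] by simp
  have "poly (smult a (pcompose Cp [:0, c:])) s = poly (smult c' Cp) s" for s
    using E3[of s 1] d'0 by (simp add: poly_pcompose algebra_simps)
  then have "smult a (pcompose Cp [:0, c:]) = smult c' Cp" using poly_eq_poly_eq_iff by blast
  then have c2: "c^2 = 1" using scal[OF n2 _ a c, of c'] by (simp add: Cp_def)
  have cpm: "c = 1 \<or> c = -1" using c2 by (simp add: power2_eq_1_iff)
  have epm: "e = 1 \<or> e = -1" using e2 by (simp add: power2_eq_1_iff)
  have "a = c * e" using cae e2 by (simp add: power2_eq_square algebra_simps)
  then have "\<psi> = (\<lambda>y. mk3 (c*e*y$1) (c*y$2) (e*y$3))" using psi by auto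
  then show ?thesis using cpm epm by blast
qed



lemma g_inv_pow: "(g_inv ^^ n) x = mk3 (poly (q n) (x$3) * x$1 + poly (q (n+1)) (x$3) * x$2)
     (poly (q (n+1)) (x$3) * x$1 + poly (q (n+2)) (x$3) * x$2) (x$3)"
proof (induction n)
  case 0 then show ?case by (simp add: mk3_eta)
next
  case (Suc n)
  then show ?case by (simp add: g_inv_def vec3_eq algebra_simps)
qed

lemma Fi_eq_comp: "Fi n = h_inv \<circ> (g_inv ^^ n)"
  by (simp add: fun_eq_iff Fi_def h_inv_def g_inv_pow)

lemma id_tame: "id \<in> (tame :: ('k::field_char_0^3 \<Rightarrow> 'k^3) set)"
proof -
  have "invertible (mat 1 :: 'k^3^3)" unfolding invertible_def by auto
  then have "(\<lambda>x. (mat 1 :: 'k^3^3) *v x + 0) \<in> tame" by (rule tame.affine)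
  then show ?thesis by (simp add: id_def)
qed

lemma funpow_tame: "f \<in> tame \<Longrightarrow> f ^^ k \<in> tame"
  by (induction k) (simp_all add: id_tame tame.comp)

definition Hm :: "'k::field_char_0^3^3" where
  "Hm = vector [vector [0,0,1], vector [1,0,0], vector [0,1,0]]"
definition Hm' :: "'k::field_char_0^3^3" where
  "Hm' = vector [vector [0,1,0], vector [0,0,1], vector [1,0,0]]"
definition Sm :: "'k::field_char_0^3^3" where
  "Sm = vector [vector [0,1,0], vector [1,0,0], vector [0,0,1]]"

lemma mat1_3: "(mat 1 :: 'k::field_char_0^3^3) = vector [vector [1,0,0], vector [0,1,0], vector [0,0,1]]"
  by (simp add: vec_eq_iff forall_3 mat_def)

lemma Hm_inv: "invertible (Hm :: 'k::field_char_0^3^3)"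
  unfolding invertible_def
  by (rule exI[of _ Hm'])
     (simp add: mat1_3 Hm_def Hm'_def vec_eq_iff forall_3 matrix_matrix_mult_def sum_3)

lemma Sm_inv: "invertible (Sm :: 'k::field_char_0^3^3)"
  unfolding invertible_def
  by (rule exI[of _ Sm])
     (simp add: mat1_3 Sm_def vec_eq_iff forall_3 matrix_matrix_mult_def sum_3)

lemma h_inv_tame: "(h_inv :: 'k::field_char_0^3 \<Rightarrow> 'k^3) \<in> tame"
proof -
  have "(\<lambda>x. (Hm :: 'k^3^3) *v x + 0) \<in> tame" by (rule tame.affine[OF Hm_inv])
  moreover have "(\<lambda>x. (Hm :: 'k^3^3) *v x + 0) = h_inv"
    by (simp add: fun_eq_iff h_inv_def Hm_def vec3_eq matrix_vector_mult_def sum_3)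
  ultimately show ?thesis by simp
qed

lemma g_inv_tame: "(g_inv :: 'k::field_char_0^3 \<Rightarrow> 'k^3) \<in> tame"
proof -
  have "(\<lambda>x. (Sm :: 'k^3^3) *v x + 0) \<in> tame" by (rule tame.affine[OF Sm_inv])
  moreover have "(\<lambda>a b. a * b) \<in> (poly2 :: ('k \<Rightarrow> 'k \<Rightarrow> 'k) set)"
    using poly2.mult[OF poly2.var1 poly2.var2] by simp
  then have "elementary (\<lambda>a b. a * b) \<in> (tame :: ('k^3 \<Rightarrow> 'k^3) set)" by (rule tame.elem)
  ultimately have "(\<lambda>x. (Sm :: 'k^3^3) *v x + 0) \<circ> elementary (\<lambda>a b. a * b) \<in> tame" by (rule tame.comp)
  moreover have "(\<lambda>x. (Sm :: 'k^3^3) *v x + 0) \<circ> elementary (\<lambda>a b. a * b) = g_inv"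
    by (simp add: fun_eq_iff g_inv_def Sm_def elementary_def vec3_eq matrix_vector_mult_def sum_3)
  ultimately show ?thesis by simp
qed

lemma fmap_tame: "fmap n \<in> tame"
  unfolding fmap_def gmap_def hmap_def
  by (intro tame.comp funpow_tame tame.inverse g_inv_tame h_inv_tame)

lemma tame_bij: "f \<in> tame \<Longrightarrow> bij f" using tame_poly by blast

lemma inv_fmap: "inv (fmap n) = (Fi n :: 'k::field_char_0^3 \<Rightarrow> 'k^3)"
proof -
  have bg: "bij (g_inv :: 'k^3 \<Rightarrow> 'k^3)" and bh: "bij (h_inv :: 'k^3 \<Rightarrow> 'k^3)"
    using tame_bij g_inv_tame h_inv_tame by blast+
  have bgm: "bij (gmap :: 'k^3 \<Rightarrow> 'k^3)" unfolding gmap_def using bg bij_imp_bij_inv by blast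
  have bhm: "bij (hmap :: 'k^3 \<Rightarrow> 'k^3)" unfolding hmap_def using bh bij_imp_bij_inv by blast
  have "inv (fmap n :: 'k^3 \<Rightarrow> 'k^3) = inv hmap \<circ> inv (gmap ^^ n)"
    unfolding fmap_def by (rule o_inv_distrib[OF bij_fn[OF bgm] bhm])
  also have "inv (gmap ^^ n :: 'k^3 \<Rightarrow> 'k^3) = (inv gmap) ^^ n" by (rule inv_fn[OF bgm])
  also have "inv gmap = (g_inv :: 'k^3 \<Rightarrow> 'k^3)" unfolding gmap_def using bg inv_inv_eq by blast
  also have "inv hmap = (h_inv :: 'k^3 \<Rightarrow> 'k^3)" unfolding hmap_def using bh inv_inv_eq by blast
  finally show ?thesis by (simp add: Fi_eq_comp comp_def)
qed

definition ipow :: "('a \<Rightarrow> 'a) \<Rightarrow> int \<Rightarrow> 'a \<Rightarrow> 'a" where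
  "ipow F j = (if 0 \<le> j then F ^^ nat j else inv F ^^ nat (- j))"

lemma fpow_ipow: "fpow n j = ipow (fmap n) j"
  by (simp add: fpow_def ipow_def)

lemma ipow_step: "bij F \<Longrightarrow> ipow F (j + 1) = ipow F j \<circ> F"
proof (cases "0 \<le> j")
  case True
  then have "nat (j + 1) = Suc (nat j)" by simp
  then show ?thesis using True by (simp add: ipow_def funpow_Suc_right del: funpow.simps)
next
  case False
  assume bF: "bij F"
  have e1: "ipow F (j + 1) = inv F ^^ nat (- (j + 1))"
    using False by (cases "j + 1 = 0") (simp_all add: ipow_def)
  have "nat (- j) = Suc (nat (- (j + 1)))" using False by simp
  then have "ipow F j = inv F ^^ nat (- (j + 1)) \<circ> inv F"
    using False by (simp add: ipow_def funpow_Suc_right del: funpow.simps)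
  moreover have "inv F \<circ> F = id" using bF by (simp add: bij_is_inj inv_o_cancel)
  ultimately show ?thesis using e1 by (simp add: comp_assoc)
qed

lemma ipow_add: "bij F \<Longrightarrow> ipow F (j + int k) = ipow F j \<circ> F ^^ k"
proof (induction k)
  case 0 then show ?case by simp
next
  case (Suc k)
  have "ipow F (j + int (Suc k)) = ipow F ((j + int k) + 1)" by (simp add: algebra_simps)
  also have "\<dots> = ipow F (j + int k) \<circ> F" by (rule ipow_step[OF Suc.prems])
  also have "\<dots> = ipow F j \<circ> F ^^ Suc k" using Suc by (simp add: funpow_Suc_right fun_eq_iff del: funpow.simps)
  finally show ?case .
qed

lemma ipow_tame: "F \<in> tame \<Longrightarrow> ipow F j \<in> tame"
  by (simp add: ipow_def funpow_tame tame.inverse)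



lemma x1_vertex: "[x1] \<in> vertex [x1 :: 'k::field_char_0^3 \<Rightarrow> 'k]"
proof -
  have "GLr 1 (\<lambda>i j. 1 :: 'k)" unfolding GLr_def by (rule exI[of _ "\<lambda>i j. 1"]) simp
  then show ?thesis unfolding vertex_def
    by (intro CollectI conjI exI[of _ "\<lambda>i j. 1 :: 'k"] exI[of _ "\<lambda>i. 0 :: 'k"]) auto
qed

lemma vertex1_elem:
  assumes "gs \<in> vertex [u :: 'k::field_char_0^3 \<Rightarrow> 'k]"
  shows "\<exists>\<alpha> \<beta>. \<alpha> \<noteq> 0 \<and> gs = [\<lambda>x. \<alpha> * u x + \<beta>]"
proof -
  from assms obtain A b where len: "length gs = 1" and G: "GLr 1 A"
    and eq: "\<forall>i<1. gs ! i = (\<lambda>x. (\<Sum>j<1. A i j * ([u] ! j) x) + b i)"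
    unfolding vertex_def by auto
  from G obtain B where "(\<Sum>j<1. A 0 j * B j 0) = 1" unfolding GLr_def by fastforce
  then have "A 0 0 \<noteq> 0" by auto
  moreover have "gs = [\<lambda>x. A 0 0 * u x + b 0]"
    using len eq by (cases gs) auto
  ultimately show ?thesis by blast
qed

lemma vertex_fix:
  fixes \<phi> G :: "'k::field_char_0^3 \<Rightarrow> 'k^3"
  assumes "act \<phi> (act G (vertex [x1])) = act G (vertex [x1])"
  shows "\<exists>\<alpha> \<beta>. \<alpha> \<noteq> 0 \<and> (\<forall>x. inv G (inv \<phi> x) $ 1 = \<alpha> * inv G x $ 1 + \<beta>)"
proof -
  have "map (\<lambda>c. c \<circ> inv \<phi>) (map (\<lambda>c. c \<circ> inv G) [x1]) \<in> act \<phi> (act G (vertex [x1]))"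
    unfolding act_def using x1_vertex by blast
  then have "map (\<lambda>c. c \<circ> inv \<phi>) (map (\<lambda>c. c \<circ> inv G) [x1]) \<in> act G (vertex [x1])"
    using assms by simp
  then obtain gs where gs: "gs \<in> vertex [x1]" and L: "[x1 \<circ> inv G \<circ> inv \<phi>] = map (\<lambda>c. c \<circ> inv G) gs"
    unfolding act_def by auto
  obtain \<alpha> \<beta> where a: "\<alpha> \<noteq> 0" and g: "gs = [\<lambda>x. \<alpha> * x1 x + \<beta>]" using vertex1_elem[OF gs] by blast
  have "x1 \<circ> inv G \<circ> inv \<phi> = (\<lambda>x. \<alpha> * x1 x + \<beta>) \<circ> inv G" using L g by simp
  then have "\<forall>x. inv G (inv \<phi> x) $ 1 = \<alpha> * inv G x $ 1 + \<beta>"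
    by (simp add: fun_eq_iff x1_def)
  then show ?thesis using a by blast
qed

theorem lemma7p11:
  fixes n :: nat and l m :: int
  assumes "n \<ge> 2" and "even n" and "l < m" and "m - l \<ge> 7"
  shows "finite {\<phi> :: 'k::field_char_0^3 \<Rightarrow> 'k^3. \<phi> \<in> tame \<and>
           (\<forall>i. l \<le> i \<and> i \<le> m \<longrightarrow> act \<phi> (gamma n i) = (gamma n i :: ('k^3 \<Rightarrow> 'k) list set))}"
proof -
  define F where "F = (fmap n :: 'k^3 \<Rightarrow> 'k^3)"
  have Ft: "F \<in> tame" unfolding F_def by (rule fmap_tame)
  have bF: "bij F" using tame_bij Ft by blast
  define j where "j = (l + 1) div 2"
  define P where "P = ipow F j"
  have Pt: "P \<in> tame" unfolding P_def using ipow_tame Ft by blast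
  have bP: "bij P" using tame_bij Pt by blast
  define Mk where "Mk = (\<lambda>(c, e). (\<lambda>y. mk3 (c*e*y$1) (c*y$2) (e*y$3)) :: 'k^3 \<Rightarrow> 'k^3)"
  define T where "T = (\<lambda>\<psi>. inv (P \<circ> \<psi> \<circ> inv P))"
  have sub: "{\<phi> :: 'k^3 \<Rightarrow> 'k^3. \<phi> \<in> tame \<and>
           (\<forall>i. l \<le> i \<and> i \<le> m \<longrightarrow> act \<phi> (gamma n i) = (gamma n i :: ('k^3 \<Rightarrow> 'k) list set))}
        \<subseteq> T ` Mk ` ({1, -1} \<times> {1, -1})"
  proof
    fix \<phi> assume "\<phi> \<in> {\<phi> :: 'k^3 \<Rightarrow> 'k^3. \<phi> \<in> tame \<and>
           (\<forall>i. l \<le> i \<and> i \<le> m \<longrightarrow> act \<phi> (gamma n i) = (gamma n i :: ('k^3 \<Rightarrow> 'k) list set))}"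
    then have \<phi>t: "\<phi> \<in> tame" and fx: "\<And>i. l \<le> i \<Longrightarrow> i \<le> m \<Longrightarrow> act \<phi> (gamma n i) = gamma n i" by auto
    have b\<phi>: "bij \<phi>" using tame_bij \<phi>t by blast
    define \<psi> where "\<psi> = inv P \<circ> inv \<phi> \<circ> P"
    have \<psi>t: "\<psi> \<in> tame" unfolding \<psi>_def using Pt \<phi>t by (intro tame.comp tame.inverse)
    have pm: "polymap \<psi>" using tame_poly \<psi>t by blast
    have h: "\<exists>\<alpha> \<beta>. \<alpha> \<noteq> 0 \<and> (\<forall>y. ((Fi n)^^k) (\<psi> y) $ 1 = \<alpha> * ((Fi n)^^k) y $ 1 + \<beta>)" if k: "k < 4" for k
    proof -
      define i where "i = 2 * (j + int k)"
      have li: "l \<le> i" "i \<le> m" using k assms unfolding i_def j_def by auto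
      have "gamma n i = act (ipow F (j + int k)) (vertex [x1])"
        by (simp add: gamma_def i_def fpow_ipow F_def)
      then have "act \<phi> (act (ipow F (j + int k)) (vertex [x1])) = act (ipow F (j + int k)) (vertex [x1])"
        using fx[OF li] by simp
      then obtain \<alpha> \<beta> where a: "\<alpha> \<noteq> 0"
        and E: "\<forall>x. inv (ipow F (j + int k)) (inv \<phi> x) $ 1 = \<alpha> * inv (ipow F (j + int k)) x $ 1 + \<beta>"
        using vertex_fix by blast
      have "inv (ipow F (j + int k)) = inv (F ^^ k) \<circ> inv P"
        unfolding ipow_add[OF bF] P_def by (rule o_inv_distrib) (use bP P_def bF in simp_all)
      also have "inv (F ^^ k) = (Fi n) ^^ k" using inv_fn[OF bF] inv_fmap F_def by metis
      finally have IG: "inv (ipow F (j + int k)) = (Fi n) ^^ k \<circ> inv P" .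
      have "\<forall>y. ((Fi n)^^k) (\<psi> y) $ 1 = \<alpha> * ((Fi n)^^k) y $ 1 + \<beta>"
      proof
        fix y
        have "inv P (P y) = y" using bP by (simp add: bij_is_inj)
        then show "((Fi n)^^k) (\<psi> y) $ 1 = \<alpha> * ((Fi n)^^k) y $ 1 + \<beta>"
          using E[rule_format, of "P y"] unfolding IG \<psi>_def by simp
      qed
      then show ?thesis using a by blast
    qed
    obtain c e where ce: "(c = 1 \<or> c = -1)" "(e = 1 \<or> e = -1)"
      and \<psi>eq: "\<psi> = (\<lambda>y. mk3 (c*e*y$1) (c*y$2) (e*y$3))"
      using core[OF assms(1) assms(2) pm h] by blast
    have "P \<circ> \<psi> \<circ> inv P = (P \<circ> inv P) \<circ> inv \<phi> \<circ> (P \<circ> inv P)" unfolding \<psi>_def by (simp add: comp_assoc)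
    also have "P \<circ> inv P = id" using bP bij_is_surj surj_iff by blast
    finally have "P \<circ> \<psi> \<circ> inv P = inv \<phi>" by (simp add: comp_def)
    then have "T \<psi> = \<phi>" unfolding T_def using b\<phi> inv_inv_eq by metis
    moreover have "\<psi> = Mk (c, e)" unfolding Mk_def \<psi>eq by simp
    moreover have "(c, e) \<in> {1, -1} \<times> {1, -1}" using ce by auto
    ultimately show "\<phi> \<in> T ` Mk ` ({1, -1} \<times> {1, -1})" by blast
  qed
  show ?thesis by (rule finite_subset[OF sub]) simp
qed


end
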